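(* Let $\mathfrak g=\bigoplus_{p\in I}V_p$ and $S=\bigcup_{p\in I}S_p$ be a resonant decomposition (so that $\mathfrak G_R=\bigoplus_p S_p\otimes V_p$ is a resonant subalgebra of $S\otimes\mathfrak g$), and let $|T_{A_1}\cdots T_{A_n}|$ be an invariant tensor for $\mathfrak g$. Denote by $\{T_{a_p}\}$ a basis of $V_p$. (i) For arbitrary constants $\alpha_\gamma$, the components $$|T_{(a_{p_1},\alpha_{p_1})}\cdots T_{(a_{p_n},\alpha_{p_n})}|=\alpha_\gamma K_{\alpha_{p_1}\cdots\alpha_{p_n}}{}^{\gamma}|T_{a_{p_1}}\cdots T_{a_{p_n}}|,\qquad \lambda_{\alpha_{p_k}}\in S_{p_k},$$ form an invariant tensor for $\mathfrak G_R$. (ii) If moreover $S$ has a zero element $\lambda_{N+1}=0_S$ with nonzero elements $\lambda_i$, $i=0,\dots,N$, then for arbitrary constants $\alpha_j$ the components $|T_{(a_{p_1},i_{p_1})}\cdots T_{(a_{p_n},i_{p_n})}|=\sum_{j=0}^N\alpha_jK_{i_{p_1}\cdots i_{p_n}}{}^{j}|T_{a_{p_1}}\cdots T_{a_{p_n}}|$, with $\lambda_{i_{p_k}}\in S_{p_k}$ nonzero, form an invariant tensor for the $0_S$-forced algebra of $\mathfrak G_R$.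
   Context: A semigroup is a set with closed associative multiplication; $S$ is finite and abelian; $0_S$ satisfies $0_S\lambda=\lambda0_S=0_S$. For subsets, $S_p\times S_q=\{\lambda_\alpha\lambda_\beta:\lambda_\alpha\in S_p,\lambda_\beta\in S_q\}$. The decomposition is resonant if there are $i_{(p,q)}\subset I$ with $[V_p,V_q]\subset\bigoplus_{r\in i_{(p,q)}}V_r$ and $S_p\times S_q\subset\bigcap_{r\in i_{(p,q)}}S_r$. The $n$-selector $K_{\alpha_1\cdots\alpha_n}{}^{\gamma}$ equals $1$ if $\lambda_{\alpha_1}\cdots\lambda_{\alpha_n}=\lambda_\gamma$, $0$ otherwise. $S\otimes\mathfrak g$ has basis $T_{(A,\alpha)}=\lambda_\alpha T_A$, grading $\mathfrak q(A)$, bracket $[T_{(A,\alpha)},T_{(B,\beta)}]=K_{\alpha\beta}{}^{\gamma}C_{AB}{}^CT_{(C,\gamma)}$; $\mathfrak G_R$ is spanned by $\lambda_\alpha T_{a_p}$ with $\lambda_\alpha\in S_p$. The $0_S$-forced algebra of $\mathfrak G_R$ has basis $T_{(a_p,i)}$ with $\lambda_i\in S_p$ nonzero and bracket $[T_{(a_p,i)},T_{(b_q,j)}]=\sum_{k=0}^NK_{ij}{}^kC_{a_pb_q}{}^{c_r}T_{(c_r,k)}$. Invariance of a rank-$n$ tensor on a Lie superalgebra with structure constants $C_{AB}{}^C$ means $\sum_{p=1}^{n}(-1)^{\mathfrak q(A_0)(\mathfrak q(A_1)+\cdots+\mathfrak q(A_{p-1}))}C_{A_0A_p}{}^{B}|T_{A_1}\cdots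 T_{A_{p-1}}T_BT_{A_{p+1}}\cdots T_{A_n}|=0$ for all indices. *)

theory Defs
  imports Main
begin

text \<open>A Lie superalgebra is given by a (finite) basis type 'A, a grading
  q :: 'A \<Rightarrow> nat with values in {0,1}, and structure constants
  C A B D = C_{AB}^D, so that [T_A,T_B] = sum_D C_{AB}^D T_D.\<close>

definition lie_superalgebra_sc ::
  "('A::finite \<Rightarrow> nat) \<Rightarrow> ('A \<Rightarrow> 'A \<Rightarrow> 'A \<Rightarrow> 'k::field) \<Rightarrow> bool" where
  "lie_superalgebra_sc q C \<longleftrightarrow>
     (\<forall>A. q A \<in> {0,1}) \<and>
     (\<forall>A B D. C A B D \<noteq> 0 \<longrightarrow> q D = (q A + q B) mod 2) \<and>
     (\<forall>A B D. C A B D = - ((-1) ^ (q A * q B)) * C B A D) \<and>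
     (\<forall>A B D F.
        (-1) ^ (q A * q D) * (\<Sum>E\<in>UNIV. C B D E * C A E F)
      + (-1) ^ (q B * q A) * (\<Sum>E\<in>UNIV. C D A E * C B E F)
      + (-1) ^ (q D * q B) * (\<Sum>E\<in>UNIV. C A B E * C D E F) = 0)"

definition invariant_tensor ::
  "'b set \<Rightarrow> ('b \<Rightarrow> nat) \<Rightarrow> ('b \<Rightarrow> 'b \<Rightarrow> 'b \<Rightarrow> 'k::field) \<Rightarrow> nat
    \<Rightarrow> ('b list \<Rightarrow> 'k) \<Rightarrow> bool" where
  "invariant_tensor Bs q C n T \<longleftrightarrow>
     (\<forall>A0\<in>Bs. \<forall>As. length As = n \<longrightarrow> set As \<subseteq> Bs \<longrightarrow>
        (\<Sum>p<n. (-1) ^ (q A0 * (\<Sum>k<p. q (As ! k))) *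
            (\<Sum>B\<in>Bs. C A0 (As ! p) B * T (As[p := B]))) = 0)"

definition abelian_semigroup :: "('s::finite \<Rightarrow> 's \<Rightarrow> 's) \<Rightarrow> bool" where
  "abelian_semigroup m \<longleftrightarrow>
     (\<forall>x y z. m (m x y) z = m x (m y z)) \<and> (\<forall>x y. m x y = m y x)"

fun sg_prod :: "('s \<Rightarrow> 's \<Rightarrow> 's) \<Rightarrow> 's list \<Rightarrow> 's" where
  "sg_prod m [x] = x"
| "sg_prod m (x # y # ys) = m x (sg_prod m (y # ys))"
| "sg_prod m [] = undefined"

definition selector :: "('s \<Rightarrow> 's \<Rightarrow> 's) \<Rightarrow> 's list \<Rightarrow> 's \<Rightarrow> 'k::field" where
  "selector m xs g = (if xs \<noteq> [] \<and> sg_prod m xs = g then 1 else 0)"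

definition is_zero_elem :: "('s \<Rightarrow> 's \<Rightarrow> 's) \<Rightarrow> 's \<Rightarrow> bool" where
  "is_zero_elem m z \<longleftrightarrow> (\<forall>x. m z x = z \<and> m x z = z)"

text \<open>Resonant decomposition: the basis of g is partitioned by part :: 'A => 'p
  (V_p spanned by the T_a with part a = p), Sp p \<subseteq> S, S is the union of the Sp p,
  and there are i(p,q) with [V_p,V_q] \<subseteq> (+)_{r \<in> i(p,q)} V_r and
  S_p x S_q \<subseteq> \<Inter>_{r \<in> i(p,q)} S_r.\<close>

definition resonant ::
  "('s \<Rightarrow> 's \<Rightarrow> 's) \<Rightarrow> ('A \<Rightarrow> 'A \<Rightarrow> 'A \<Rightarrow> 'k::field) \<Rightarrow> ('A \<Rightarrow> 'p)
    \<Rightarrow> ('p \<Rightarrow> 's set) \<Rightarrow> bool" where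
  "resonant m C part Sp \<longleftrightarrow>
     (\<forall>s. \<exists>p. s \<in> Sp p) \<and>
     (\<exists>i :: 'p \<Rightarrow> 'p \<Rightarrow> 'p set.
        (\<forall>a b c. C a b c \<noteq> 0 \<longrightarrow> part c \<in> i (part a) (part b)) \<and>
        (\<forall>p q x y. x \<in> Sp p \<longrightarrow> y \<in> Sp q \<longrightarrow> (\<forall>r\<in>i p q. m x y \<in> Sp r)))"

text \<open>Structure constants of S \<otimes> g on the basis T_{(A,alpha)} = lambda_alpha T_A.\<close>

definition exp_sc ::
  "('s \<Rightarrow> 's \<Rightarrow> 's) \<Rightarrow> ('A \<Rightarrow> 'A \<Rightarrow> 'A \<Rightarrow> 'k::field)
    \<Rightarrow> ('A \<times> 's) \<Rightarrow> ('A \<times> 's) \<Rightarrow> ('A \<times> 's) \<Rightarrow> 'k" where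
  "exp_sc m C X Y Z = selector m [snd X, snd Y] (snd Z) * C (fst X) (fst Y) (fst Z)"

definition resonant_basis :: "('A \<Rightarrow> 'p) \<Rightarrow> ('p \<Rightarrow> 's set) \<Rightarrow> ('A \<times> 's) set" where
  "resonant_basis part Sp = {(a, s). s \<in> Sp (part a)}"

text \<open>Its bracket is [T_(a,i),T_(b,j)] = sum_{k nonzero} K_ij^k C_ab^c T_(c,k), i.e. the
  structure constants exp_sc restricted to this basis.\<close>

definition forced_basis :: "('A \<Rightarrow> 'p) \<Rightarrow> ('p \<Rightarrow> 's set) \<Rightarrow> 's \<Rightarrow> ('A \<times> 's) set" where
  "forced_basis part Sp z = {(a, s). s \<in> Sp (part a) \<and> s \<noteq> z}"

end

theory Submission
  imports Defs
begin

lemma sg_prod_upd: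
  assumes ab: "abelian_semigroup m"
  shows "p < length xs \<Longrightarrow> sg_prod m (xs[p := m s (xs!p)]) = m s (sg_prod m xs)"
proof (induction xs arbitrary: p)
  case Nil then show ?case by simp
next
  case (Cons x xs)
  have A: "\<forall>x y z. m (m x y) z = m x (m y z)" and Cm: "\<forall>x y. m x y = m y x"
    using ab unfolding abelian_semigroup_def by auto
  show ?case
  proof (cases xs)
    case Nil then show ?thesis using Cons by simp
  next
    case (Cons y ys)
    note xs = this
    show ?thesis
    proof (cases p)
      case 0 then show ?thesis using xs A by simp
    next
      case (Suc p')
      then have p': "p' < length xs" using Cons.prems by simp
      then obtain y' ys' where e: "xs[p' := m s (xs!p')] = y' # ys'"
        using xs neq_Nil_conv[of "xs[p' := m s (xs!p')]"] list_update_nonempty[of xs p'] by blast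
      have "sg_prod m ((x # xs)[p := m s ((x # xs) ! p)])
          = m x (sg_prod m (xs[p' := m s (xs!p')]))"
        using Suc e by simp
      also have "\<dots> = m x (m s (sg_prod m xs))" using Cons.IH p' by simp
      also have "\<dots> = m s (m x (sg_prod m xs))" using A Cm by metis
      finally show ?thesis using xs by simp
    qed
  qed
qed

lemma sg_prod_zero:
  assumes z: "is_zero_elem m z"
  shows "z \<in> set xs \<Longrightarrow> sg_prod m xs = z"
proof (induction xs)
  case Nil then show ?case by simp
next
  case (Cons x xs)
  then show ?case using z unfolding is_zero_elem_def
    by (cases xs) auto
qed

lemma sel2: "selector m [x, y] t = (if t = m x y then 1 else 0)"
  unfolding selector_def by auto

lemma generic:
  fixes q :: "'A::finite \<Rightarrow> nat"
    and C :: "'A \<Rightarrow> 'A \<Rightarrow> 'A \<Rightarrow> 'k::field"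
    and m :: "'s::finite \<Rightarrow> 's \<Rightarrow> 's"
    and T :: "'A list \<Rightarrow> 'k"
    and T' :: "('A \<times> 's) list \<Rightarrow> 'k"
    and h :: "'s \<Rightarrow> 'k"
  assumes ab: "abelian_semigroup m"
    and inv: "invariant_tensor UNIV q C n T"
    and TT: "\<And>Xs. Xs \<noteq> [] \<Longrightarrow> T' Xs = h (sg_prod m (map snd Xs)) * T (map fst Xs)"
    and cl: "\<And>a0 s0 a s b. (a0, s0) \<in> Bs \<Longrightarrow> (a, s) \<in> Bs \<Longrightarrow> C a0 a b \<noteq> 0
              \<Longrightarrow> (b, m s0 s) \<notin> Bs \<Longrightarrow> m s0 s = z \<and> is_zero_elem m z \<and> h z = 0"
  shows "invariant_tensor Bs (\<lambda>X. q (fst X)) (exp_sc m C) n T'"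
  unfolding invariant_tensor_def
proof (intro ballI allI impI)
  fix A0 As
  assume A0: "A0 \<in> Bs" and len: "length As = n" and sub: "set As \<subseteq> Bs"
  obtain a0 s0 where A0e: "A0 = (a0, s0)" by (cases A0)
  define P where "P = sg_prod m (map snd As)"
  have invT: "(\<Sum>p<n. (-1) ^ (q a0 * (\<Sum>k<p. q (map fst As ! k))) *
            (\<Sum>B\<in>UNIV. C a0 (map fst As ! p) B * T ((map fst As)[p := B]))) = 0"
  proof -
    have "\<forall>A0\<in>UNIV. \<forall>As'. length As' = n \<longrightarrow> set As' \<subseteq> UNIV \<longrightarrow>
        (\<Sum>p<n. (-1) ^ (q A0 * (\<Sum>k<p. q (As' ! k))) *
            (\<Sum>B\<in>UNIV. C A0 (As' ! p) B * T (As'[p := B]))) = 0"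
      using inv unfolding invariant_tensor_def by blast
    then have "length (map fst As) = n \<longrightarrow> set (map fst As) \<subseteq> UNIV \<longrightarrow>
        (\<Sum>p<n. (-1) ^ (q a0 * (\<Sum>k<p. q (map fst As ! k))) *
            (\<Sum>B\<in>UNIV. C a0 (map fst As ! p) B * T ((map fst As)[p := B]))) = 0"
      by blast
    then show ?thesis using len by simp
  qed
  have termeq: "(\<Sum>B\<in>Bs. exp_sc m C A0 (As ! p) B * T' (As[p := B]))
      = h (m s0 P) * (\<Sum>b\<in>UNIV. C a0 (map fst As ! p) b * T ((map fst As)[p := b]))"
    if p: "p < n" for p
  proof -
    obtain ap sp where Ape: "As ! p = (ap, sp)" by (cases "As ! p")
    have Apin: "(ap, sp) \<in> Bs" using sub p len Ape nth_mem by (metis subsetD)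
    define u where "u = m s0 sp"
    define F where "F = (\<lambda>B. exp_sc m C A0 (As ! p) B * T' (As[p := B]))"
    have "(\<Sum>B\<in>Bs. F B) = (\<Sum>B\<in>UNIV. if B \<in> Bs then F B else 0)"
      using sum.inter_restrict[of UNIV F Bs] by simp
    also have "\<dots> = (\<Sum>b\<in>UNIV. \<Sum>t\<in>UNIV. if (b, t) \<in> Bs then F (b, t) else 0)"
      by (simp add: UNIV_Times_UNIV[symmetric] sum.cartesian_product del: UNIV_Times_UNIV)
    also have "\<dots> = (\<Sum>b\<in>UNIV. if (b, u) \<in> Bs then C a0 ap b * T' (As[p := (b, u)]) else 0)"
    proof (rule sum.cong[OF refl])
      fix b
      have "(\<Sum>t\<in>UNIV. if (b, t) \<in> Bs then F (b, t) else 0)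
          = (\<Sum>t\<in>UNIV. if u = t then (if (b, t) \<in> Bs then C a0 ap b * T' (As[p := (b, t)]) else 0) else 0)"
        by (rule sum.cong[OF refl]) (auto simp: F_def exp_sc_def A0e Ape sel2 u_def)
      also have "\<dots> = (if (b, u) \<in> Bs then C a0 ap b * T' (As[p := (b, u)]) else 0)"
        by (subst sum.delta') auto
      finally show "(\<Sum>t\<in>UNIV. if (b, t) \<in> Bs then F (b, t) else 0)
          = (if (b, u) \<in> Bs then C a0 ap b * T' (As[p := (b, u)]) else 0)" .
    qed
    also have "\<dots> = (\<Sum>b\<in>UNIV. h (m s0 P) * (C a0 (map fst As ! p) b * T ((map fst As)[p := b])))"
    proof (rule sum.cong[OF refl])
      fix b
      have ne: "As \<noteq> []" using p len by auto
      have mapfst: "map fst (As[p := (b, u)]) = (map fst As)[p := b]" by (simp add: map_update)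
      have mapsnd: "map snd (As[p := (b, u)]) = (map snd As)[p := m s0 (map snd As ! p)]"
        using p len Ape by (simp add: map_update u_def)
      have sgp: "sg_prod m (map snd (As[p := (b, u)])) = m s0 P"
        unfolding mapsnd P_def by (rule sg_prod_upd[OF ab]) (use p len in simp)
      have fa: "map fst As ! p = ap" using p len Ape by simp
      show "(if (b, u) \<in> Bs then C a0 ap b * T' (As[p := (b, u)]) else 0)
          = h (m s0 P) * (C a0 (map fst As ! p) b * T ((map fst As)[p := b]))"
      proof (cases "(b, u) \<in> Bs")
        case True
        then show ?thesis using TT[of "As[p := (b, u)]"] ne sgp mapfst fa by simp
      next
        case False
        show ?thesis
        proof (cases "C a0 ap b = 0")
          case True then show ?thesis using False fa by simp
        next
          case Cn: False
          have zz: "u = z" "is_zero_elem m z" "h z = 0"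
            using cl[OF A0[unfolded A0e] Apin Cn] False u_def by auto
          have "z \<in> set (map snd (As[p := (b, u)]))"
          proof -
            have "(b, z) \<in> set (As[p := (b, u)])" using p len zz(1) by (simp add: set_update_memI)
            then show ?thesis by force
          qed
          then have "m s0 P = z" using sg_prod_zero[OF zz(2)] sgp by metis
          then show ?thesis using False zz by simp
        qed
      qed
    qed
    also have "\<dots> = h (m s0 P) * (\<Sum>b\<in>UNIV. C a0 (map fst As ! p) b * T ((map fst As)[p := b]))"
      by (simp add: sum_distrib_left)
    finally show ?thesis unfolding F_def .
  qed
  have "(\<Sum>p<n. (-1) ^ (q (fst A0) * (\<Sum>k<p. q (fst (As ! k)))) *
            (\<Sum>B\<in>Bs. exp_sc m C A0 (As ! p) B * T' (As[p := B])))
      = (\<Sum>p<n. h (m s0 P) * ((-1) ^ (q a0 * (\<Sum>k<p. q (map fst As ! k))) *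
            (\<Sum>B\<in>UNIV. C a0 (map fst As ! p) B * T ((map fst As)[p := B]))))"
  proof (rule sum.cong[OF refl])
    fix p assume "p \<in> {..<n}"
    then have p: "p < n" by simp
    have "(\<Sum>k<p. q (fst (As ! k))) = (\<Sum>k<p. q (map fst As ! k))"
      using p len by (intro sum.cong) auto
    then show "(-1) ^ (q (fst A0) * (\<Sum>k<p. q (fst (As ! k)))) *
            (\<Sum>B\<in>Bs. exp_sc m C A0 (As ! p) B * T' (As[p := B]))
       = h (m s0 P) * ((-1) ^ (q a0 * (\<Sum>k<p. q (map fst As ! k))) *
            (\<Sum>B\<in>UNIV. C a0 (map fst As ! p) B * T ((map fst As)[p := B])))"
      using termeq[OF p] A0e by (simp only: fst_conv mult.left_commute)
  qed
  also have "\<dots> = 0" using invT by (simp add: sum_distrib_left[symmetric])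
  finally show "(\<Sum>p<n. (-1) ^ (q (fst A0) * (\<Sum>k<p. q (fst (As ! k)))) *
            (\<Sum>B\<in>Bs. exp_sc m C A0 (As ! p) B * T' (As[p := B]))) = 0" .
qed
theorem mainTheorem6:
  fixes q :: "'A::finite \<Rightarrow> nat"
    and C :: "'A \<Rightarrow> 'A \<Rightarrow> 'A \<Rightarrow> 'k::field"
    and m :: "'s::finite \<Rightarrow> 's \<Rightarrow> 's"
    and part :: "'A \<Rightarrow> 'p"
    and Sp :: "'p \<Rightarrow> 's set"
    and n :: nat
    and T :: "'A list \<Rightarrow> 'k"
  assumes "lie_superalgebra_sc q C"
    and "abelian_semigroup m"
    and "resonant m C part Sp"
    and "invariant_tensor UNIV q C n T"
  shows "(\<forall>\<alpha> :: 's \<Rightarrow> 'k.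
            invariant_tensor (resonant_basis part Sp) (\<lambda>X. q (fst X)) (exp_sc m C) n
              (\<lambda>Xs. \<Sum>\<gamma>\<in>UNIV. \<alpha> \<gamma> * selector m (map snd Xs) \<gamma> * T (map fst Xs)))
       \<and> (\<forall>z. is_zero_elem m z \<longrightarrow>
            (\<forall>\<alpha> :: 's \<Rightarrow> 'k.
              invariant_tensor (forced_basis part Sp z) (\<lambda>X. q (fst X)) (exp_sc m C) n
                (\<lambda>Xs. \<Sum>j\<in>UNIV - {z}. \<alpha> j * selector m (map snd Xs) j * T (map fst Xs))))"
proof -
  note ab = assms(2) and inv = assms(4)
  obtain i :: "'p \<Rightarrow> 'p \<Rightarrow> 'p set" where
    i1: "\<forall>a b c. C a b c \<noteq> 0 \<longrightarrow> part c \<in> i (part a) (part b)" and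
    i2: "\<forall>p q x y. x \<in> Sp p \<longrightarrow> y \<in> Sp q \<longrightarrow> (\<forall>r\<in>i p q. m x y \<in> Sp r)"
    using assms(3) unfolding resonant_def by blast
  have res: "m s0 s \<in> Sp (part b)" if "s0 \<in> Sp (part a0)" "s \<in> Sp (part a)" "C a0 a b \<noteq> 0"
    for s0 s a0 a b
    using i1 i2 that by blast
  have part1: "invariant_tensor (resonant_basis part Sp) (\<lambda>X. q (fst X)) (exp_sc m C) n
              (\<lambda>Xs. \<Sum>\<gamma>\<in>UNIV. \<alpha> \<gamma> * selector m (map snd Xs) \<gamma> * T (map fst Xs))"
    for \<alpha> :: "'s \<Rightarrow> 'k"
  proof (rule generic[OF ab inv, where h = \<alpha> and z = undefined])
    fix Xs :: "('A \<times> 's) list" assume ne: "Xs \<noteq> []"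
    have "(\<Sum>\<gamma>\<in>UNIV. \<alpha> \<gamma> * selector m (map snd Xs) \<gamma> * T (map fst Xs))
        = (\<Sum>\<gamma>\<in>UNIV. if sg_prod m (map snd Xs) = \<gamma> then \<alpha> \<gamma> * T (map fst Xs) else 0)"
      using ne by (intro sum.cong) (auto simp: selector_def)
    also have "\<dots> = \<alpha> (sg_prod m (map snd Xs)) * T (map fst Xs)"
      by (subst sum.delta') auto
    finally show "(\<Sum>\<gamma>\<in>UNIV. \<alpha> \<gamma> * selector m (map snd Xs) \<gamma> * T (map fst Xs))
        = \<alpha> (sg_prod m (map snd Xs)) * T (map fst Xs)" .
  next
    fix a0 s0 a s b
    assume "(a0, s0) \<in> resonant_basis part Sp" "(a, s) \<in> resonant_basis part Sp"
      "C a0 a b \<noteq> 0" "(b, m s0 s) \<notin> resonant_basis part Sp"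
    then show "m s0 s = undefined \<and> is_zero_elem m undefined \<and> \<alpha> undefined = 0"
      using res unfolding resonant_basis_def by auto
  qed
  have part2: "invariant_tensor (forced_basis part Sp z) (\<lambda>X. q (fst X)) (exp_sc m C) n
                (\<lambda>Xs. \<Sum>j\<in>UNIV - {z}. \<alpha> j * selector m (map snd Xs) j * T (map fst Xs))"
    if z: "is_zero_elem m z" for z and \<alpha> :: "'s \<Rightarrow> 'k"
  proof (rule generic[OF ab inv, where h = "\<lambda>j. if j = z then 0 else \<alpha> j" and z = z])
    fix Xs :: "('A \<times> 's) list" assume ne: "Xs \<noteq> []"
    have "(\<Sum>j\<in>UNIV - {z}. \<alpha> j * selector m (map snd Xs) j * T (map fst Xs))
        = (\<Sum>j\<in>UNIV - {z}. if sg_prod m (map snd Xs) = j then \<alpha> j * T (map fst Xs) else 0)"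
      using ne by (intro sum.cong) (auto simp: selector_def)
    also have "\<dots> = (if sg_prod m (map snd Xs) = z then 0 else \<alpha> (sg_prod m (map snd Xs))) * T (map fst Xs)"
      by (subst sum.delta') auto
    finally show "(\<Sum>j\<in>UNIV - {z}. \<alpha> j * selector m (map snd Xs) j * T (map fst Xs))
        = (if sg_prod m (map snd Xs) = z then 0 else \<alpha> (sg_prod m (map snd Xs))) * T (map fst Xs)" .
  next
    fix a0 s0 a s b
    assume "(a0, s0) \<in> forced_basis part Sp z" "(a, s) \<in> forced_basis part Sp z"
      "C a0 a b \<noteq> 0" "(b, m s0 s) \<notin> forced_basis part Sp z"
    then show "m s0 s = z \<and> is_zero_elem m z \<and> (if z = z then 0 else \<alpha> z) = 0"
      using res z unfolding forced_basis_def by auto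
  qed
  show ?thesis using part1 part2 by blast
qed

end
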